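(* Let $K^{(1)},K^{(2)}$ be independent fractal percolations on $I=[0,1]$ with the same parameters $M\in\mathbb{N}_{\geq2}$ and $p\in(0,1]$, with construction steps $K_n^{(i)}$, and let $D_n^{(i)}:=\overline{I\setminus K_n^{(i)}}$. Then for any $n\in\mathbb{N}_0$, $$\mathbb{E}V_1(D_n^{(1)}\cap D_n^{(2)})=1-2\mathbb{E}V_1(K_n^{(1)})+\mathbb{E}V_1(K_n^{(1)}\cap K_n^{(2)}),$$ $$\mathbb{E}V_0(D_n^{(1)}\cap D_n^{(2)})=2\mathbb{E}V_0(K_n^{(1)})-\mathbb{E}V_0(K_n^{(1)}\cap K_n^{(2)})+\mathbb{E}N(K_n^{(1)}\cap K_n^{(2)})+1-4p^n+2p^{2n}.$$ Moreover, $\mathbb{E}V_1(D_n^{(1)})=1-\mathbb{E}V_1(K_n^{(1)})$ and $\mathbb{E}V_0(D_n^{(1)})=\mathbb{E}V_0(K_n^{(1)})+1-2p^n$.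
   Context: Fractal percolation on $[0,1]$: $K_0=[0,1]$; given $K_{n-1}$, a union of closed grid intervals of length $M^{-(n-1)}$, each is divided into $M$ closed subintervals of length $M^{-n}$, each kept independently (of everything else) with probability $p$; $K_n$ is the union of kept subintervals. $\overline{A}$ denotes closure; $V_1$ is length, $V_0$ the number of connected components, and $N(A)$ the number of isolated points of $A$. *)

theory Defs
  imports "HOL-Analysis.Analysis" "HOL-Probability.Probability" "HOL-Probability.Product_PMF"
begin

definition grid_cell :: "nat \<Rightarrow> nat \<Rightarrow> nat \<Rightarrow> real set" where
  "grid_cell M n j = {real j / real M ^ n .. (real j + 1) / real M ^ n}"

text \<open>Index set of the Bernoulli variables used up to step n:
  (k, j) with 1 <= k <= n and j < M^k, one for each grid interval of level k.\<close>
definition perc_index :: "nat \<Rightarrow> nat \<Rightarrow> (nat \<times> nat) set" where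
  "perc_index M n = {(k, j). 1 \<le> k \<and> k \<le> n \<and> j < M ^ k}"

definition perc_pmf :: "nat \<Rightarrow> real \<Rightarrow> nat \<Rightarrow> (nat \<times> nat \<Rightarrow> bool) pmf" where
  "perc_pmf M p n = Pi_pmf (perc_index M n) False (\<lambda>_. bernoulli_pmf p)"

text \<open>Construction step K_n: union of level-n grid intervals all of whose
  ancestors (at levels 1..n, including itself) were kept.
  The level-k ancestor of the level-n interval j is j div M^(n-k).\<close>
definition perc_K :: "nat \<Rightarrow> nat \<Rightarrow> (nat \<times> nat \<Rightarrow> bool) \<Rightarrow> real set" where
  "perc_K M n \<omega> = \<Union> {grid_cell M n j | j. j < M ^ n \<and>
      (\<forall>k \<in> {1..n}. \<omega> (k, j div M ^ (n - k)))}"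

definition perc_D :: "nat \<Rightarrow> nat \<Rightarrow> (nat \<times> nat \<Rightarrow> bool) \<Rightarrow> real set" where
  "perc_D M n \<omega> = closure ({0..1} - perc_K M n \<omega>)"

definition V1 :: "real set \<Rightarrow> real" where
  "V1 A = measure lborel A"

definition V0 :: "real set \<Rightarrow> real" where
  "V0 A = real (card (components A))"

definition Niso :: "real set \<Rightarrow> real" where
  "Niso A = real (card {x \<in> A. \<not> x islimpt A})"

end

theory Submission
  imports Defs
begin


lemma conn_split:
  fixes X Y C :: "real set"
  assumes "closed X" "closed Y" "X \<inter> Y = {}" "connected C" "C \<subseteq> X \<union> Y"
  shows "C \<subseteq> X \<or> C \<subseteq> Y"
proof (rule ccontr)
  assume a: "\<not> (C \<subseteq> X \<or> C \<subseteq> Y)"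
  have "X \<inter> C \<noteq> {}" "Y \<inter> C \<noteq> {}" using a assms(5) by auto
  moreover have "X \<inter> Y \<inter> C = {}" using assms(3) by auto
  ultimately have "\<exists>A B. closed A \<and> closed B \<and> C \<subseteq> A \<union> B \<and> A \<inter> B \<inter> C = {} \<and> A \<inter> C \<noteq> {} \<and> B \<inter> C \<noteq> {}"
    using assms(1,2,5) by (intro exI[of _ X] exI[of _ Y]) simp
  from assms(4)[unfolded connected_closed] this show False by contradiction
qed

lemma comp_in_sub:
  fixes X Y C :: "real set"
  assumes "C \<in> components (X \<union> Y)" "C \<subseteq> X"
  shows "C \<in> components X"
proof -
  have C: "C \<noteq> {}" "connected C"
    and mx: "\<And>D. D \<noteq> {} \<and> C \<subseteq> D \<and> D \<subseteq> X \<union> Y \<and> connected D \<longrightarrow> D = C"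
    using assms(1) unfolding in_components_maximal by auto
  show ?thesis unfolding in_components_maximal
  proof (intro conjI allI impI)
    fix D assume D: "D \<noteq> {} \<and> C \<subseteq> D \<and> D \<subseteq> X \<and> connected D"
    then show "D = C" using mx[of D] by auto
  qed (use C assms(2) in auto)
qed


lemma comp_in_sup:
  fixes X Y C :: "real set"
  assumes cX: "closed X" and cY: "closed Y" and d: "X \<inter> Y = {}" and "C \<in> components X"
  shows "C \<in> components (X \<union> Y)"
proof -
  have C: "C \<noteq> {}" "C \<subseteq> X" "connected C"
    and mx: "\<And>D. D \<noteq> {} \<and> C \<subseteq> D \<and> D \<subseteq> X \<and> connected D \<longrightarrow> D = C"
    using assms(4) unfolding in_components_maximal by auto
  show ?thesis unfolding in_components_maximal
  proof (intro conjI allI impI)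
    fix D assume D: "D \<noteq> {} \<and> C \<subseteq> D \<and> D \<subseteq> X \<union> Y \<and> connected D"
    then have "D \<subseteq> X \<or> D \<subseteq> Y" using conn_split[OF cX cY d, of D] by auto
    moreover have "\<not> D \<subseteq> Y" using D C d by blast
    ultimately have "D \<subseteq> X" by auto
    then show "D = C" using mx[of D] D by auto
  qed (use C in auto)
qed

lemma comp_Un_sep:
  fixes X Y :: "real set"
  assumes cX: "closed X" and cY: "closed Y" and d: "X \<inter> Y = {}"
  shows "components (X \<union> Y) = components X \<union> components Y"
proof (intro equalityI subsetI)
  fix C assume C: "C \<in> components (X \<union> Y)"
  then have "C \<subseteq> X \<or> C \<subseteq> Y"
    using conn_split[OF cX cY d] in_components_connected in_components_subset by metis
  moreover have "C \<in> components (Y \<union> X)" using C by (simp add: Un_commute)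
  ultimately show "C \<in> components X \<union> components Y"
    using comp_in_sub[OF C] comp_in_sub[of C Y X] by auto
next
  fix C assume "C \<in> components X \<union> components Y"
  then show "C \<in> components (X \<union> Y)"
  proof
    assume "C \<in> components X" then show ?thesis using comp_in_sup[OF cX cY d] by auto
  next
    assume "C \<in> components Y" then have "C \<in> components (Y \<union> X)"
      using comp_in_sup[OF cY cX] d by auto
    then show ?thesis by (simp add: Un_commute)
  qed
qed
lemma card_comp_Un_point:
  fixes X :: "real set"
  assumes "closed X" "y \<notin> X" "finite (components X)"
  shows "card (components (X \<union> {y})) = card (components X) + 1"
proof -
  have "components (X \<union> {y}) = components X \<union> {{y}}"
    using comp_Un_sep[OF assms(1) closed_singleton, of y] assms(2)
    by (simp add: components_eq_sing_iff[THEN iffD2])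
  moreover have "{y} \<notin> components X" using assms(2) in_components_subset by blast
  ultimately show ?thesis using assms(3) by simp
qed

lemma finite_comp_Un_point:
  fixes X :: "real set"
  assumes "closed X" "y \<notin> X" "finite (components X)"
  shows "finite (components (X \<union> {y}))"
proof -
  have "components (X \<union> {y}) = components X \<union> {{y}}"
    using comp_Un_sep[OF assms(1) closed_singleton, of y] assms(2)
    by (simp add: components_eq_sing_iff[THEN iffD2])
  then show ?thesis using assms by simp
qed

lemma comp_Un_touch:
  fixes X C :: "real set"
  assumes cX: "closed X" and cC: "closed C" and conC: "connected C" and xi: "X \<inter> C = {x}"
    and fin: "finite (components X)"
  shows "card (components (X \<union> C)) = card (components X)
         \<and> finite (components (X \<union> C))"
proof -
  have xX: "x \<in> X" using xi by blast
  define K where "K = connected_component_set X x"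
  have K: "K \<in> components X" using xX by (simp add: K_def componentsI)
  define R where "R = \<Union>(components X - {K})"
  have cK: "closed K" using closed_components[OF cX K] .
  have cR: "closed R" unfolding R_def
    using fin closed_components[OF cX] by (intro closed_Union) auto
  have XKR: "X = K \<union> R" unfolding R_def using K Union_components[of X] by blast
  have dKR: "K \<inter> R = {}" unfolding R_def using K pairwise_disjoint_components[of X]
    unfolding pairwise_def by blast
  have compX: "components X = components K \<union> components R"
    using comp_Un_sep[OF cK cR dKR] XKR by simp
  have compK: "components K = {K}"
    using K by (simp add: components_eq_sing_iff in_components_connected in_components_nonempty)
  have xK: "x \<in> K" using xX by (simp add: K_def)
  have KnR: "K \<notin> components R" using in_components_subset dKR xK by blast
  define K' where "K' = K \<union> C"
  have cK': "closed K'" using cK cC by (simp add: K'_def closed_Un)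
  have xC: "x \<in> C" using xi by blast
  have conK': "connected K'" unfolding K'_def
    using xK xC by (intro connected_Un in_components_connected[OF K] conC) blast
  have RX: "R \<subseteq> X" using XKR by blast
  have xR: "x \<notin> R" using dKR xK by blast
  have "C \<inter> R \<subseteq> {x}" using RX xi by blast
  then have dK'R: "K' \<inter> R = {}" unfolding K'_def using dKR xR by blast
  have XC: "X \<union> C = K' \<union> R" unfolding K'_def using XKR by blast
  have compK': "components K' = {K'}"
    using conK' xK by (auto simp add: components_eq_sing_iff K'_def)
  have comp2: "components (X \<union> C) = components K' \<union> components R"
    using comp_Un_sep[OF cK' cR dK'R] XC by simp
  have K'nR: "K' \<notin> components R" using in_components_subset dK'R xK K'_def by blast
  have finR: "finite (components R)" using fin compX by simp
  show ?thesis using comp2 compK' K'nR compX compK KnR finR by simp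
qed



definition gc :: "nat \<Rightarrow> nat \<Rightarrow> real set" where
  "gc N j = {real j / real N .. (real j + 1) / real N}"

definition SS :: "nat \<Rightarrow> (nat \<Rightarrow> bool) \<Rightarrow> real set" where
  "SS N b = \<Union> {gc N j | j. j < N \<and> b j}"

lemma gc_iff: "0 < N \<Longrightarrow> x \<in> gc N j \<longleftrightarrow> real j \<le> x * real N \<and> x * real N \<le> real j + 1"
  by (auto simp: gc_def divide_le_eq le_divide_eq)

lemma nat_lt1: "real i < real j + 1 \<Longrightarrow> i \<le> j"
  by (metis less_Suc_eq_le of_nat_Suc of_nat_less_iff add.commute)

lemma gc_interior:
  assumes "0 < N" "real j < x * real N" "x * real N < real j + 1" "x \<in> gc N i"
  shows "i = j"
proof -
  have "real i < real j + 1" "real j < real i + 1" using assms gc_iff[of N x i] by auto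
  then show ?thesis using nat_lt1 by (meson antisym)
qed

lemma gc_grid:
  assumes "0 < N"
  shows "real k / real N \<in> gc N i \<longleftrightarrow> i = k \<or> Suc i = k"
proof -
  have e: "real k / real N * real N = real k" using assms by simp
  have "real k / real N \<in> gc N i \<longleftrightarrow> real i \<le> real k \<and> real k \<le> real i + 1"
    using gc_iff[OF assms] e by simp
  also have "\<dots> \<longleftrightarrow> i \<le> k \<and> k \<le> Suc i" by (metis of_nat_Suc of_nat_le_iff add.commute)
  finally show ?thesis by auto
qed

lemma SS_mem: "x \<in> SS N b \<longleftrightarrow> (\<exists>j<N. b j \<and> x \<in> gc N j)"
  unfolding SS_def by blast

lemma gc_cover:
  assumes "0 < N" "0 \<le> x" "x \<le> 1"
  shows "\<exists>j<N. x \<in> gc N j"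
proof -
  define t where "t = x * real N"
  have t0: "0 \<le> t" and tN: "t \<le> real N" using assms by (auto simp: t_def mult_le_cancel_right1)
  show ?thesis
  proof (cases "t < real N")
    case True
    define j where "j = nat \<lfloor>t\<rfloor>"
    have rj: "real j = of_int \<lfloor>t\<rfloor>" using t0 by (simp add: j_def)
    have "real j \<le> t" "t < real j + 1" using rj by linarith+
    moreover then have "j < N" using True by linarith
    ultimately show ?thesis using gc_iff[OF assms(1), of x j] t_def by auto
  next
    case False
    then have "t = real N" using tN by auto
    moreover have "real (N - 1) = real N - 1" using assms(1) by simp
    ultimately show ?thesis using gc_iff[OF assms(1), of x "N - 1"] t_def assms(1)
      by (intro exI[of _ "N - 1"]) auto
  qed
qed

lemma gc_two:
  assumes "0 < N" "x \<in> gc N i" "x \<in> gc N j" "i \<noteq> j"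
  shows "\<exists>k. x = real k / real N \<and> k \<le> max i j"
proof -
  { fix i j assume a: "x \<in> gc N i" "x \<in> gc N j" "i < j"
    then have "real (i + 1) \<le> real j" using a(3) by simp
    then have "x * real N = real j" using a gc_iff[OF assms(1)] by force
    then have "x = real j / real N" using assms(1) by (simp add: eq_divide_eq)
    then have "\<exists>k. x = real k / real N \<and> k \<le> max i j" using a by auto }
  note * = this
  show ?thesis using assms(2,3,4) *[of i j] *[of j i] by (cases "i < j") (auto simp: max.commute)
qed

lemma gc_sub01: "0 < N \<Longrightarrow> j < N \<Longrightarrow> gc N j \<subseteq> {0..1}"
  by (auto simp: gc_def divide_le_eq le_divide_eq)

lemma SS_sub01: assumes "0 < N" shows "SS N b \<subseteq> {0..1}"
  using gc_sub01[OF assms] unfolding SS_def by blast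

lemma closed_SS: "closed (SS N b)"
  unfolding SS_def
proof (rule closed_Union)
  have "{gc N j | j. j < N \<and> b j} \<subseteq> gc N ` {..<N}" by auto
  then show "finite {gc N j | j. j < N \<and> b j}" using finite_subset by blast
qed (auto simp: gc_def)

lemma gc_lt: "0 < N \<Longrightarrow> real j / real N < (real j + 1) / real N"
  by (simp add: divide_strict_right_mono)

lemma closure_SS:
  assumes N: "0 < N"
  shows "closure ({0..1} - SS N b) = SS N (\<lambda>j. \<not> b j)"
proof
  have "{0..1} - SS N b \<subseteq> SS N (\<lambda>j. \<not> b j)"
  proof
    fix x assume x: "x \<in> {0..1} - SS N b"
    then obtain j where "j < N" "x \<in> gc N j" using gc_cover[OF N] by auto
    then show "x \<in> SS N (\<lambda>j. \<not> b j)" using x by (auto simp: SS_mem)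
  qed
  then show "closure ({0..1} - SS N b) \<subseteq> SS N (\<lambda>j. \<not> b j)"
    using closed_SS by (rule closure_minimal)
next
  show "SS N (\<lambda>j. \<not> b j) \<subseteq> closure ({0..1} - SS N b)"
  proof
    fix x assume "x \<in> SS N (\<lambda>j. \<not> b j)"
    then obtain j where j: "j < N" "\<not> b j" "x \<in> gc N j" by (auto simp: SS_mem)
    have "{real j / real N <..< (real j + 1) / real N} \<subseteq> {0..1} - SS N b"
    proof
      fix y assume y: "y \<in> {real j / real N <..< (real j + 1) / real N}"
      then have y1: "real j < y * real N" "y * real N < real j + 1"
        using N by (auto simp: divide_less_eq less_divide_eq)
      have "y \<in> gc N j" using y by (auto simp: gc_def)
      then have "y \<in> {0..1}" using gc_sub01[OF N j(1)] by auto
      moreover have "y \<notin> SS N b"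
        using gc_interior[OF N y1] j(2) by (auto simp: SS_mem)
      ultimately show "y \<in> {0..1} - SS N b" by auto
    qed
    then have "closure {real j / real N <..< (real j + 1) / real N} \<subseteq> closure ({0..1} - SS N b)"
      by (rule closure_mono)
    then show "x \<in> closure ({0..1} - SS N b)" using j(3) gc_lt[OF N, of j]
      by (auto simp: gc_def)
  qed
qed



lemma Icc_fmeas: "{0..1::real} \<in> fmeasurable lborel"
  by (simp add: fmeasurable_def emeasure_lborel_Icc)

lemma SS_fmeas: "0 < N \<Longrightarrow> SS N b \<in> fmeasurable lborel"
  by (rule fmeasurableI2[OF Icc_fmeas SS_sub01]) (auto intro: borel_closed closed_SS)

lemma V1_D2:
  assumes N: "0 < N"
  shows "V1 (SS N (\<lambda>j. \<not> b j) \<inter> SS N (\<lambda>j. \<not> c j))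
     = 1 - V1 (SS N b) - V1 (SS N c) + V1 (SS N b \<inter> SS N c)"
proof -
  define U where "U = SS N b \<union> SS N c"
  define G where "G = (\<lambda>k. real k / real N) ` {..N}"
  define E where "E = SS N (\<lambda>j. \<not> b j) \<inter> SS N (\<lambda>j. \<not> c j)"
  have s1: "{0..1} - U \<subseteq> E"
  proof
    fix x assume x: "x \<in> {0..1} - U"
    then obtain j where "j < N" "x \<in> gc N j" using gc_cover[OF N] by auto
    then show "x \<in> E" using x by (auto simp: E_def U_def SS_mem)
  qed
  have s2: "E \<subseteq> ({0..1} - U) \<union> G"
  proof
    fix x assume x: "x \<in> E"
    then obtain i i' where i: "i < N" "\<not> b i" "x \<in> gc N i" and i': "i' < N" "\<not> c i'" "x \<in> gc N i'"
      by (auto simp: E_def SS_mem)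
    have x01: "x \<in> {0..1}" using i(3) gc_sub01[OF N i(1)] by blast
    show "x \<in> ({0..1} - U) \<union> G"
    proof (cases "x \<in> U")
      case True
      then obtain j where j: "j < N" "x \<in> gc N j" "b j \<and> i \<noteq> j \<or> c j \<and> i' \<noteq> j"
        using i i' by (auto simp: U_def SS_mem)
      have "\<exists>k. x = real k / real N \<and> k \<le> N"
      proof (cases "b j \<and> i \<noteq> j")
        case True
        then obtain k where "x = real k / real N" "k \<le> max i j" using gc_two[OF N i(3) j(2)] by blast
        then show ?thesis using i(1) j(1) by (intro exI[of _ k]) auto
      next
        case False
        then have "i' \<noteq> j" using j(3) by blast
        then obtain k where "x = real k / real N" "k \<le> max i' j" using gc_two[OF N i'(3) j(2)] by blast
        then show ?thesis using i'(1) j(1) by (intro exI[of _ k]) auto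
      qed
      then show ?thesis by (auto simp: G_def)
    qed (use x01 in auto)
  qed
  have EE: "E = ({0..1} - U) \<union> (E \<inter> G)" using s1 s2 by blast
  have finG: "finite (E \<inter> G)" by (auto simp: G_def)
  have bU: "U \<in> sets lborel" unfolding U_def using closed_SS by (auto intro!: borel_closed)
  have "V1 E = measure lborel ({0..1} - U)"
    unfolding V1_def
    by (subst EE, rule measure_Un_null_set) (use bU finite_imp_null_set_lborel[OF finG] in auto)
  also have "\<dots> = 1 - measure lborel U"
    using bU SS_sub01[OF N] by (subst measure_Diff) (auto simp: U_def emeasure_lborel_Icc)
  also have "measure lborel U = V1 (SS N b) + V1 (SS N c) - V1 (SS N b \<inter> SS N c)"
    unfolding U_def V1_def by (rule measure_Un3) (auto intro: SS_fmeas[OF N])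
  finally show ?thesis by (simp add: E_def)
qed



definition Bn :: "nat \<Rightarrow> (nat \<Rightarrow> bool) \<Rightarrow> nat \<Rightarrow> bool" where
  "Bn N b m \<longleftrightarrow> m < N \<and> b m"

definition ptS :: "nat \<Rightarrow> (nat \<Rightarrow> bool) \<Rightarrow> nat \<Rightarrow> bool" where
  "ptS N b k \<longleftrightarrow> Bn N b k \<or> (1 \<le> k \<and> Bn N b (k - 1))"

lemma SS_grid:
  assumes N: "0 < N"
  shows "real k / real N \<in> SS N b \<longleftrightarrow> ptS N b k"
proof -
  have "real k / real N \<in> SS N b \<longleftrightarrow> (\<exists>j<N. b j \<and> (j = k \<or> Suc j = k))"
    using gc_grid[OF N] by (simp add: SS_mem)
  also have "\<dots> \<longleftrightarrow> ptS N b k"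
    unfolding ptS_def Bn_def
  proof
    assume "\<exists>j<N. b j \<and> (j = k \<or> Suc j = k)"
    then obtain j where "j < N" "b j" "j = k \<or> Suc j = k" by blast
    then show "k < N \<and> b k \<or> 1 \<le> k \<and> k - 1 < N \<and> b (k - 1)" by auto
  next
    assume "k < N \<and> b k \<or> 1 \<le> k \<and> k - 1 < N \<and> b (k - 1)"
    then show "\<exists>j<N. b j \<and> (j = k \<or> Suc j = k)"
    proof
      assume "1 \<le> k \<and> k - 1 < N \<and> b (k - 1)"
      then show ?thesis by (intro exI[of _ "k - 1"]) auto
    qed auto
  qed
  finally show ?thesis .
qed

lemma SS_nonneg: assumes "0 < N" "x \<in> SS N b" shows "0 \<le> x"
  using subsetD[OF SS_sub01[OF assms(1)] assms(2)] by simp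

lemma V0_formula_aux:
  fixes b c :: "nat \<Rightarrow> bool"
  assumes N: "0 < N" and mN: "m \<le> N"
  defines "A \<equiv> SS N b \<inter> SS N c"
  shows "finite (components (A \<inter> {..real m / real N})) \<and>
         card (components (A \<inter> {..real m / real N})) = of_bool (b 0 \<and> c 0) +
           (\<Sum>i<m. of_bool (\<not> (Bn N b i \<and> Bn N c i) \<and> ptS N b (Suc i) \<and> ptS N c (Suc i)))"
  using mN
proof (induction m)
  case 0
  have "A \<inter> {..real 0 / real N} = (if b 0 \<and> c 0 then {0} else {})"
  proof -
    have "A \<inter> {..real 0 / real N} \<subseteq> {0}" using SS_nonneg[OF N] by (force simp: A_def)
    moreover have "0 \<in> A \<longleftrightarrow> b 0 \<and> c 0"
      using SS_grid[OF N, of 0 b] SS_grid[OF N, of 0 c] N by (simp add: A_def ptS_def Bn_def)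
    ultimately show ?thesis by auto
  qed
  then show ?case by (simp add: components_eq_sing_iff[THEN iffD2])
next
  case (Suc m)
  then have mN: "m < N" by simp
  define Am where "Am = A \<inter> {..real m / real N}"
  have IH: "finite (components Am)" "card (components Am) = of_bool (b 0 \<and> c 0) +
           (\<Sum>i<m. of_bool (\<not> (Bn N b i \<and> Bn N c i) \<and> ptS N b (Suc i) \<and> ptS N c (Suc i)))"
    using Suc by (auto simp: Am_def)
  have A0: "x \<in> A \<Longrightarrow> 0 \<le> x" for x using SS_nonneg[OF N] by (auto simp: A_def)
  have rS: "real (Suc m) / real N = (real m + 1) / real N" by simp
  have mono: "real m / real N \<le> (real m + 1) / real N" using N by (simp add: divide_right_mono)
  have split: "A \<inter> {..real (Suc m) / real N} = Am \<union> (A \<inter> gc N m)"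
    using mono A0 unfolding Am_def gc_def rS by auto
  have cA: "closed A" unfolding A_def using closed_SS by (intro closed_Int)
  have cAm: "closed Am" unfolding Am_def using cA by (intro closed_Int closed_atMost)
  have pm: "real m / real N \<in> gc N m" "real (Suc m) / real N \<in> gc N m"
    by (rule gc_grid[OF N, THEN iffD2], simp)+
  show ?case
  proof (cases "Bn N b m \<and> Bn N c m")
    case True
    have gA: "gc N m \<subseteq> A" using True by (auto simp: A_def SS_mem Bn_def)
    have pA: "real m / real N \<in> A" using gA pm by auto
    have i1: "Am \<inter> gc N m = {real m / real N}"
      using pA pm(1) by (auto simp: Am_def gc_def)
    have "A \<inter> {..real (Suc m) / real N} = Am \<union> gc N m" using split gA by auto
    moreover have "card (components (Am \<union> gc N m)) = card (components Am)
         \<and> finite (components (Am \<union> gc N m))"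
      by (rule comp_Un_touch[OF cAm _ _ i1 IH(1)]) (auto simp: gc_def)
    ultimately show ?thesis using IH True by (simp add: Am_def)
  next
    case False
    have sub: "A \<inter> gc N m \<subseteq> {real m / real N, real (Suc m) / real N}"
    proof
      fix x assume x: "x \<in> A \<inter> gc N m"
      show "x \<in> {real m / real N, real (Suc m) / real N}"
      proof (rule ccontr)
        assume nx: "x \<notin> {real m / real N, real (Suc m) / real N}"
        have "real m / real N < x" "x < (real m + 1) / real N"
          using x nx unfolding rS by (auto simp: gc_def)
        then have i: "real m < x * real N" "x * real N < real m + 1"
          using N by (auto simp: divide_less_eq less_divide_eq)
        from x obtain j where "j < N" "b j" "x \<in> gc N j" by (auto simp: A_def SS_mem)
        then have "b m" using gc_interior[OF N i] by auto
        moreover from x obtain j' where "j' < N" "c j'" "x \<in> gc N j'" by (auto simp: A_def SS_mem)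
        then have "c m" using gc_interior[OF N i] by auto
        ultimately show False using False mN by (auto simp: Bn_def)
      qed
    qed
    have inc: "(real (Suc m) / real N \<in> A) \<longleftrightarrow> ptS N b (Suc m) \<and> ptS N c (Suc m)"
      unfolding A_def by (simp only: Int_iff SS_grid[OF N])
    have e1: "A \<inter> {..real (Suc m) / real N} = Am \<union> (A \<inter> {real (Suc m) / real N})"
    proof -
      have "real m / real N \<in> A \<Longrightarrow> real m / real N \<in> Am" by (auto simp: Am_def)
      then show ?thesis using split sub pm by auto
    qed
    show ?thesis
    proof (cases "ptS N b (Suc m) \<and> ptS N c (Suc m)")
      case True
      have nA: "real (Suc m) / real N \<notin> Am"
        using N by (auto simp: Am_def divide_le_eq)
      have "A \<inter> {..real (Suc m) / real N} = Am \<union> {real (Suc m) / real N}"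
        using e1 inc True by auto
      then show ?thesis using card_comp_Un_point[OF cAm nA IH(1)] finite_comp_Un_point[OF cAm nA IH(1)]
        IH False True by simp
    next
      case F2: False
      have "A \<inter> {..real (Suc m) / real N} = Am"
        using e1 inc F2 by auto
      then show ?thesis using IH False F2 by simp
    qed
  qed
qed

lemma V0_formula:
  assumes N: "0 < N"
  shows "V0 (SS N b \<inter> SS N c) = of_bool (b 0 \<and> c 0) +
           (\<Sum>i<N. of_bool (\<not> (Bn N b i \<and> Bn N c i) \<and> ptS N b (Suc i) \<and> ptS N c (Suc i)))"
proof -
  have "SS N b \<inter> SS N c \<inter> {..real N / real N} = SS N b \<inter> SS N c"
    using SS_sub01[OF N, of b] N by auto
  then show ?thesis using V0_formula_aux[OF N order.refl, of b c] unfolding V0_def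
    by (simp add: of_nat_sum)
qed



lemma card_filter_sum: "real (card {m \<in> {..<N::nat}. P m}) = (\<Sum>m<N. of_bool (P m))"
proof -
  have "{m \<in> {..<N}. P m} = {..<N} \<inter> {x. P x}" by blast
  then show ?thesis by simp
qed

lemma iso_set:
  fixes b c :: "nat \<Rightarrow> bool"
  assumes N: "0 < N"
  defines "A \<equiv> SS N b \<inter> SS N c"
  shows "{x \<in> A. \<not> x islimpt A} = (\<lambda>k. real k / real N) `
     {k. k \<le> N \<and> ptS N b k \<and> ptS N c k \<and> \<not> (Bn N b k \<and> Bn N c k)
         \<and> (1 \<le> k \<longrightarrow> \<not> (Bn N b (k - 1) \<and> Bn N c (k - 1)))}"
proof (intro equalityI subsetI)
  fix x assume "x \<in> {x \<in> A. \<not> x islimpt A}"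
  then have xA: "x \<in> A" and nl: "\<not> x islimpt A" by auto
  have ng: "\<not> (Bn N b j \<and> Bn N c j)" if "x \<in> gc N j" for j
  proof
    assume G: "Bn N b j \<and> Bn N c j"
    have gA: "gc N j \<subseteq> A" using G by (auto simp: A_def SS_mem Bn_def)
    have "x islimpt gc N j" using that gc_lt[OF N, of j] by (simp add: gc_def)
    then show False using nl islimpt_subset[OF _ gA] by blast
  qed
  obtain i where i: "i < N" "b i" "x \<in> gc N i" using xA by (auto simp: A_def SS_mem)
  obtain i' where i': "i' < N" "c i'" "x \<in> gc N i'" using xA by (auto simp: A_def SS_mem)
  have "i \<noteq> i'" using ng[OF i(3)] i i' by (auto simp: Bn_def)
  then obtain k where k: "x = real k / real N" "k \<le> max i i'" using gc_two[OF N i(3) i'(3)] by blast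
  have kN: "k \<le> N" using k(2) i(1) i'(1) by auto
  have "ptS N b k \<and> ptS N c k" using xA k(1) SS_grid[OF N] by (auto simp: A_def)
  moreover have "\<not> (Bn N b k \<and> Bn N c k)"
    using ng[of k] k(1) gc_grid[OF N, of k k] by auto
  moreover have "\<not> (Bn N b (k - 1) \<and> Bn N c (k - 1))" if "1 \<le> k"
    using ng[of "k - 1"] k(1) gc_grid[OF N, of k "k - 1"] that by auto
  ultimately show "x \<in> (\<lambda>k. real k / real N) `
     {k. k \<le> N \<and> ptS N b k \<and> ptS N c k \<and> \<not> (Bn N b k \<and> Bn N c k)
         \<and> (1 \<le> k \<longrightarrow> \<not> (Bn N b (k - 1) \<and> Bn N c (k - 1)))}"
    using kN k(1) by blast
next
  fix x assume "x \<in> (\<lambda>k. real k / real N) `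
     {k. k \<le> N \<and> ptS N b k \<and> ptS N c k \<and> \<not> (Bn N b k \<and> Bn N c k)
         \<and> (1 \<le> k \<longrightarrow> \<not> (Bn N b (k - 1) \<and> Bn N c (k - 1)))}"
  then obtain k where x: "x = real k / real N" and k: "k \<le> N" "ptS N b k" "ptS N c k"
    "\<not> (Bn N b k \<and> Bn N c k)" "1 \<le> k \<Longrightarrow> \<not> (Bn N b (k - 1) \<and> Bn N c (k - 1))" by blast
  have xA: "x \<in> A" using x k SS_grid[OF N] by (auto simp: A_def)
  have "\<not> x islimpt A"
  proof
    assume "x islimpt A"
    then obtain y where y: "y \<in> A" "y \<noteq> x" "dist y x < 1 / real N"
      unfolding islimpt_approachable using N by (meson divide_pos_pos zero_less_one of_nat_0_less_iff)
    have xN: "x * real N = real k" using x N by simp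
    have e: "y * real N - real k = (y - x) * real N" using xN by (simp add: algebra_simps)
    have "\<bar>y - x\<bar> * real N < 1" using y(3) N by (simp add: dist_real_def less_divide_eq)
    then have d: "\<bar>y * real N - real k\<bar> < 1" using e N by (simp add: abs_mult)
    have ne: "y * real N \<noteq> real k" using y(2) xN N by (metis nonzero_mult_div_cancel_right of_nat_0_less_iff order_less_irrefl x)
    have y0: "0 \<le> y" using y(1) SS_nonneg[OF N] by (auto simp: A_def)
    obtain j where j: "j < N" "b j" "y \<in> gc N j" using y(1) by (auto simp: A_def SS_mem)
    obtain j' where j': "j' < N" "c j'" "y \<in> gc N j'" using y(1) by (auto simp: A_def SS_mem)
    show False
    proof (cases "y * real N < real k")
      case True
      have k1: "1 \<le> k" using True y0 N
        by (metis less_one linorder_not_le mult_nonneg_nonneg of_nat_0 of_nat_0_le_iff of_nat_less_0_iff) 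
      have rk: "real (k - 1) = real k - 1" using k1 by simp
      have i1: "real (k - 1) < y * real N" "y * real N < real (k - 1) + 1" using d True rk by auto
      have "j = k - 1" "j' = k - 1" using gc_interior[OF N i1] j(3) j'(3) by auto
      then show False using k(5)[OF k1] j j' by (auto simp: Bn_def)
    next
      case False
      have i1: "real k < y * real N" "y * real N < real k + 1" using d False ne by auto
      have "j = k" "j' = k" using gc_interior[OF N i1] j(3) j'(3) by auto
      then show False using k(4) j j' by (auto simp: Bn_def)
    qed
  qed
  then show "x \<in> {x \<in> A. \<not> x islimpt A}" using xA by auto
qed

lemma Niso_formula:
  fixes b c :: "nat \<Rightarrow> bool"
  assumes N: "0 < N"
  shows "Niso (SS N b \<inter> SS N c) = (\<Sum>m<N. of_bool (ptS N b (Suc m) \<and> ptS N c (Suc m)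
      \<and> \<not> (Bn N b (Suc m) \<and> Bn N c (Suc m)) \<and> \<not> (Bn N b m \<and> Bn N c m)))"
proof -
  define P where "P k \<longleftrightarrow> ptS N b k \<and> ptS N c k \<and> \<not> (Bn N b k \<and> Bn N c k)
         \<and> (1 \<le> k \<longrightarrow> \<not> (Bn N b (k - 1) \<and> Bn N c (k - 1)))" for k
  have inj: "inj_on (\<lambda>k. real k / real N) UNIV" using N by (auto simp: inj_on_def)
  have "Niso (SS N b \<inter> SS N c) = real (card ((\<lambda>k. real k / real N) ` {k. k \<le> N \<and> P k}))"
    unfolding Niso_def iso_set[OF N] P_def by simp
  also have "\<dots> = real (card {k. k \<le> N \<and> P k})"
    using inj by (simp add: card_image inj_on_subset)
  also have "{k. k \<le> N \<and> P k} = Suc ` {m \<in> {..<N}. P (Suc m)}"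
  proof (intro equalityI subsetI)
    fix k assume k: "k \<in> {k. k \<le> N \<and> P k}"
    then have "k \<noteq> 0" by (auto simp: P_def ptS_def)
    then obtain m where "k = Suc m" using not0_implies_Suc by blast
    then show "k \<in> Suc ` {m \<in> {..<N}. P (Suc m)}" using k by auto
  qed auto
  also have "card (Suc ` {m \<in> {..<N}. P (Suc m)}) = card {m \<in> {..<N}. P (Suc m)}"
    by (simp add: card_image)
  also have "real \<dots> = (\<Sum>m<N. of_bool (P (Suc m)))" by (rule card_filter_sum)
  finally show ?thesis by (simp add: P_def)
qed



lemma V0_D2:
  fixes b c :: "nat \<Rightarrow> bool"
  assumes N: "0 < N"
  shows "V0 (SS N (\<lambda>j. \<not> b j) \<inter> SS N (\<lambda>j. \<not> c j))
    = V0 (SS N b) + V0 (SS N c) - V0 (SS N b \<inter> SS N c) + Niso (SS N b \<inter> SS N c)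
      + 1 - of_bool (b 0) - of_bool (c 0) - of_bool (b (N - 1)) - of_bool (c (N - 1))
      + of_bool (b 0 \<and> c 0) + of_bool (b (N - 1) \<and> c (N - 1))"
proof -
  define nb where "nb = (\<lambda>j. \<not> b j)"
  define nc where "nc = (\<lambda>j. \<not> c j)"
  define L :: "nat \<Rightarrow> real" where "L m = of_bool (\<not> (Bn N nb m \<and> Bn N nc m) \<and> ptS N nb (Suc m) \<and> ptS N nc (Suc m))" for m
  define Tb :: "nat \<Rightarrow> real" where "Tb m = of_bool (\<not> (Bn N b m \<and> Bn N b m) \<and> ptS N b (Suc m) \<and> ptS N b (Suc m))" for m
  define Tc :: "nat \<Rightarrow> real" where "Tc m = of_bool (\<not> (Bn N c m \<and> Bn N c m) \<and> ptS N c (Suc m) \<and> ptS N c (Suc m))" for m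
  define Tg :: "nat \<Rightarrow> real" where "Tg m = of_bool (\<not> (Bn N b m \<and> Bn N c m) \<and> ptS N b (Suc m) \<and> ptS N c (Suc m))" for m
  define Ti :: "nat \<Rightarrow> real" where "Ti m = of_bool (ptS N b (Suc m) \<and> ptS N c (Suc m)
      \<and> \<not> (Bn N b (Suc m) \<and> Bn N c (Suc m)) \<and> \<not> (Bn N b m \<and> Bn N c m))" for m
  define w :: "nat \<Rightarrow> real" where "w k = of_bool (Bn N b (min k (N - 1)) \<or> Bn N c (min k (N - 1)))" for k
  have hL: "V0 (SS N nb \<inter> SS N nc) = of_bool (nb 0 \<and> nc 0) + sum L {..<N}"
    unfolding L_def by (rule V0_formula[OF N])
  have hb: "V0 (SS N b) = of_bool (b 0 \<and> b 0) + sum Tb {..<N}"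
    unfolding Tb_def using V0_formula[OF N, of b b] by simp
  have hc: "V0 (SS N c) = of_bool (c 0 \<and> c 0) + sum Tc {..<N}"
    unfolding Tc_def using V0_formula[OF N, of c c] by simp
  have hg: "V0 (SS N b \<inter> SS N c) = of_bool (b 0 \<and> c 0) + sum Tg {..<N}"
    unfolding Tg_def by (rule V0_formula[OF N])
  have hi: "Niso (SS N b \<inter> SS N c) = sum Ti {..<N}"
    unfolding Ti_def by (rule Niso_formula[OF N])
  have pw: "L m - Tb m - Tc m + Tg m - Ti m = w m - w (Suc m)" if m: "m < N" for m
  proof (cases "Suc m < N")
    case True
    then have mm: "min m (N - 1) = m" "min (Suc m) (N - 1) = Suc m" by auto
    show ?thesis using m True unfolding L_def Tb_def Tc_def Tg_def Ti_def w_def nb_def nc_def mm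
      by (cases "b m"; cases "c m"; cases "b (Suc m)"; cases "c (Suc m)")
         (simp_all add: Bn_def ptS_def)
  next
    case False
    then have NN: "N = Suc m" using m by auto
    show ?thesis unfolding L_def Tb_def Tc_def Tg_def Ti_def w_def nb_def nc_def NN
      by (cases "b m"; cases "c m") (simp_all add: Bn_def ptS_def)
  qed
  have "(\<Sum>m<N. L m - Tb m - Tc m + Tg m - Ti m) = (\<Sum>m<N. w m - w (Suc m))"
    using pw by (intro sum.cong) auto
  also have "\<dots> = w 0 - w N" by (rule sum_lessThan_telescope')
  also have "\<dots> = of_bool (b 0 \<or> c 0) - of_bool (b (N - 1) \<or> c (N - 1))"
  proof -
    have "min N (N - 1) = N - 1" "min 0 (N - 1) = 0" "N - 1 < N" using N by auto
    then show ?thesis by (simp add: w_def Bn_def)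
  qed
  finally have tel: "sum L {..<N} - sum Tb {..<N} - sum Tc {..<N} + sum Tg {..<N} - sum Ti {..<N}
     = of_bool (b 0 \<or> c 0) - of_bool (b (N - 1) \<or> c (N - 1))"
    by (simp add: sum.distrib sum_subtractf del: sum_of_bool_eq)
  have ob: "of_bool (P \<or> Q) = (of_bool P + of_bool Q - of_bool (P \<and> Q) :: real)"
     "of_bool (\<not> P \<and> \<not> Q) = (1 - of_bool P - of_bool Q + of_bool (P \<and> Q) :: real)" for P Q
    by (cases P; cases Q; simp)+
  show ?thesis
    unfolding nb_def[symmetric] nc_def[symmetric] hL hb hc hg hi
    using tel ob[of "b 0" "c 0"] ob[of "b (N - 1)" "c (N - 1)"]
    by (simp add: nb_def nc_def del: sum_of_bool_eq)
qed



definition keep :: "nat \<Rightarrow> nat \<Rightarrow> (nat \<times> nat \<Rightarrow> bool) \<Rightarrow> nat \<Rightarrow> bool" where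
  "keep M n \<omega> j \<longleftrightarrow> (\<forall>k\<in>{1..n}. \<omega> (k, j div M ^ (n - k)))"

lemma K_eq: "perc_K M n \<omega> = SS (M ^ n) (keep M n \<omega>)"
proof -
  have "grid_cell M n j = gc (M ^ n) j" for j by (simp add: grid_cell_def gc_def)
  then show ?thesis by (simp add: perc_K_def SS_def keep_def)
qed

lemma D_eq: "0 < M ^ n \<Longrightarrow> perc_D M n \<omega> = SS (M ^ n) (\<lambda>j. \<not> keep M n \<omega> j)"
  using closure_SS by (simp add: perc_D_def K_eq)

lemma finite_index:
  assumes "1 \<le> M" shows "finite (perc_index M n)"
proof (rule finite_subset)
  show "perc_index M n \<subseteq> {..n} \<times> {..<M ^ n}"
  proof
    fix x assume "x \<in> perc_index M n"
    then obtain k j where x: "x = (k, j)" "k \<le> n" "j < M ^ k" by (auto simp: perc_index_def)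
    have "M ^ k \<le> M ^ n" using power_increasing[OF x(2) assms] .
    then show "x \<in> {..n} \<times> {..<M ^ n}" using x by auto
  qed
qed auto

lemma finite_set_perc:
  assumes "1 \<le> M" shows "finite (set_pmf (perc_pmf M p n))"
  unfolding perc_pmf_def using finite_index[OF assms]
  by (subst set_Pi_pmf) (auto intro!: finite_PiE_dflt)

lemma prob_keep:
  assumes M: "1 \<le> M" and p: "0 \<le> p" "p \<le> 1" and j: "j < M ^ n"
  shows "measure_pmf.expectation (perc_pmf M p n) (\<lambda>\<omega>. of_bool (keep M n \<omega> j) :: real) = p ^ n"
proof -
  define I where "I = perc_index M n"
  define E where "E = (\<lambda>k. (k, j div M ^ (n - k))) ` {1..n}"
  define B where "B x = (if x \<in> E then {True} else UNIV)" for x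
  have EI: "E \<subseteq> I"
  proof
    fix x assume "x \<in> E"
    then obtain k where k: "x = (k, j div M ^ (n - k))" "1 \<le> k" "k \<le> n" by (auto simp: E_def)
    have "M ^ n = M ^ k * M ^ (n - k)" using k by (simp flip: power_add)
    then have "j div M ^ (n - k) < M ^ k" using j by (simp add: less_mult_imp_div_less)
    then show "x \<in> I" using k by (simp add: I_def perc_index_def)
  qed
  have finI: "finite I" using finite_index[OF M] by (simp add: I_def)
  have ev: "(\<lambda>\<omega>. of_bool (keep M n \<omega> j) :: real) = indicator (Pi I B)"
  proof
    fix \<omega>
    have "keep M n \<omega> j \<longleftrightarrow> (\<forall>x\<in>E. \<omega> x)" by (auto simp: keep_def E_def)
    also have "\<dots> \<longleftrightarrow> \<omega> \<in> Pi I B" using EI by (auto simp: B_def Pi_def)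
    finally show "(of_bool (keep M n \<omega> j) :: real) = indicator (Pi I B) \<omega>"
      by (simp add: indicator_def)
  qed
  have "measure_pmf.expectation (perc_pmf M p n) (\<lambda>\<omega>. of_bool (keep M n \<omega> j) :: real)
      = measure_pmf.prob (perc_pmf M p n) (Pi I B)" unfolding ev by simp
  also have "\<dots> = (\<Prod>x\<in>I. measure_pmf.prob (bernoulli_pmf p) (B x))"
    unfolding perc_pmf_def I_def by (rule measure_Pi_pmf_Pi) (use finI in \<open>simp add: I_def\<close>)
  also have "\<dots> = (\<Prod>x\<in>I. if x \<in> E then p else 1)"
    using p by (intro prod.cong) (auto simp: B_def measure_pmf_single)
  also have "\<dots> = (\<Prod>x\<in>{x \<in> I. x \<in> E}. p)" by (rule prod.inter_filter[OF finI, symmetric])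
  also have "{x \<in> I. x \<in> E} = E" using EI by auto
  also have "card E = n" unfolding E_def by (subst card_image) (auto simp: inj_on_def)
  then have "(\<Prod>x\<in>E. p) = p ^ n" by simp
  finally show ?thesis .
qed

lemma exp_pair_prod:
  fixes f g :: "'a \<Rightarrow> real"
  assumes fA: "finite (set_pmf A)" and fB: "finite (set_pmf B)"
  shows "measure_pmf.expectation (pair_pmf A B) (\<lambda>x. f (fst x) * g (snd x))
       = measure_pmf.expectation A f * measure_pmf.expectation B g"
proof -
  have "measure_pmf.expectation (pair_pmf A B) (\<lambda>x. f (fst x) * g (snd x))
      = (\<Sum>x\<in>set_pmf A \<times> set_pmf B. f (fst x) * g (snd x) * pmf (pair_pmf A B) x)"
    by (rule integral_measure_pmf_real) (use fA fB in auto)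
  also have "\<dots> = (\<Sum>a\<in>set_pmf A. \<Sum>b\<in>set_pmf B. (f a * pmf A a) * (g b * pmf B b))"
    unfolding sum.cartesian_product by (intro sum.cong refl) (auto simp: pmf_pair algebra_simps)
  also have "\<dots> = (\<Sum>a\<in>set_pmf A. f a * pmf A a) * (\<Sum>b\<in>set_pmf B. g b * pmf B b)"
    by (simp add: sum_product)
  also have "(\<Sum>a\<in>set_pmf A. f a * pmf A a) = measure_pmf.expectation A f"
    by (rule integral_measure_pmf_real[symmetric]) (use fA in auto)
  also have "(\<Sum>b\<in>set_pmf B. g b * pmf B b) = measure_pmf.expectation B g"
    by (rule integral_measure_pmf_real[symmetric]) (use fB in auto)
  finally show ?thesis .
qed



lemma V1_D1:
  assumes N: "0 < N"
  shows "V1 (SS N (\<lambda>j. \<not> b j)) = 1 - V1 (SS N b)"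
  using V1_D2[OF N, of b b] by simp

lemma Niso_SS0:
  assumes N: "0 < N"
  shows "Niso (SS N b) = 0"
proof -
  have "Niso (SS N b) = (\<Sum>m<N. of_bool (ptS N b (Suc m) \<and> ptS N b (Suc m)
      \<and> \<not> (Bn N b (Suc m) \<and> Bn N b (Suc m)) \<and> \<not> (Bn N b m \<and> Bn N b m)))"
    using Niso_formula[OF N, of b b] by simp
  also have "\<dots> = (\<Sum>m<N. (0::real))" by (intro sum.cong refl) (auto simp: ptS_def)
  finally show ?thesis by simp
qed

lemma V0_D1:
  assumes N: "0 < N"
  shows "V0 (SS N (\<lambda>j. \<not> b j)) = V0 (SS N b) + 1 - of_bool (b 0) - of_bool (b (N - 1))"
  using V0_D2[OF N, of b b] Niso_SS0[OF N, of b] by (simp del: sum_of_bool_eq)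

theorem corollary5p6:
  fixes M :: nat and p :: real and n :: nat
  assumes "M \<ge> 2" and "0 < p" and "p \<le> 1"
  defines "P \<equiv> perc_pmf M p n"
  defines "P2 \<equiv> pair_pmf (perc_pmf M p n) (perc_pmf M p n)"
  shows
    "(measure_pmf.expectation P2 (\<lambda>(\<omega>1, \<omega>2). V1 (perc_D M n \<omega>1 \<inter> perc_D M n \<omega>2))
       = 1 - 2 * measure_pmf.expectation P (\<lambda>\<omega>. V1 (perc_K M n \<omega>))
         + measure_pmf.expectation P2 (\<lambda>(\<omega>1, \<omega>2). V1 (perc_K M n \<omega>1 \<inter> perc_K M n \<omega>2)))
    \<and> (measure_pmf.expectation P2 (\<lambda>(\<omega>1, \<omega>2). V0 (perc_D M n \<omega>1 \<inter> perc_D M n \<omega>2))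
       = 2 * measure_pmf.expectation P (\<lambda>\<omega>. V0 (perc_K M n \<omega>))
         - measure_pmf.expectation P2 (\<lambda>(\<omega>1, \<omega>2). V0 (perc_K M n \<omega>1 \<inter> perc_K M n \<omega>2))
         + measure_pmf.expectation P2 (\<lambda>(\<omega>1, \<omega>2). Niso (perc_K M n \<omega>1 \<inter> perc_K M n \<omega>2))
         + 1 - 4 * p ^ n + 2 * p ^ (2 * n))
    \<and> (measure_pmf.expectation P (\<lambda>\<omega>. V1 (perc_D M n \<omega>))
       = 1 - measure_pmf.expectation P (\<lambda>\<omega>. V1 (perc_K M n \<omega>)))
    \<and> (measure_pmf.expectation P (\<lambda>\<omega>. V0 (perc_D M n \<omega>))
       = measure_pmf.expectation P (\<lambda>\<omega>. V0 (perc_K M n \<omega>)) + 1 - 2 * p ^ n)"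
proof -
  have M1: "1 \<le> M" using assms(1) by simp
  define N where "N = M ^ n"
  have N: "0 < N" using M1 by (simp add: N_def)
  have p01: "0 \<le> p" "p \<le> 1" using assms by auto
  have finP: "finite (set_pmf P)" unfolding P_def by (rule finite_set_perc[OF M1])
  have finP2: "finite (set_pmf P2)" unfolding P2_def using finite_set_perc[OF M1] by simp
  have P2P: "P2 = pair_pmf P P" by (simp add: P2_def P_def)
  have intP: "integrable (measure_pmf P) f" for f :: "_ \<Rightarrow> real"
    by (rule integrable_measure_pmf_finite[OF finP])
  have intP2: "integrable (measure_pmf P2) f" for f :: "_ \<Rightarrow> real"
    by (rule integrable_measure_pmf_finite[OF finP2])
  define kb where "kb \<omega> = keep M n \<omega>" for \<omega>
  have Keq: "perc_K M n \<omega> = SS N (kb \<omega>)" for \<omega> by (simp add: K_eq N_def kb_def)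
  have Deq: "perc_D M n \<omega> = SS N (\<lambda>j. \<not> kb \<omega> j)" for \<omega> using D_eq N by (simp add: N_def kb_def)
  have pk: "measure_pmf.expectation P (\<lambda>\<omega>. of_bool (kb \<omega> j) :: real) = p ^ n" if "j < N" for j
    unfolding P_def kb_def using prob_keep[OF M1 p01, of j] that by (simp add: N_def)
  have pk0: "measure_pmf.expectation P (\<lambda>\<omega>. of_bool (kb \<omega> 0) :: real) = p ^ n" using pk N by simp
  have pk1: "measure_pmf.expectation P (\<lambda>\<omega>. of_bool (kb \<omega> (N - 1)) :: real) = p ^ n" using pk N by simp
  have pp: "measure_pmf.expectation P2 (\<lambda>x. of_bool (kb (fst x) j) * of_bool (kb (snd x) j) :: real)
      = p ^ n * p ^ n" if "j < N" for j
  proof -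
    have "measure_pmf.expectation (pair_pmf P P) (\<lambda>x. of_bool (kb (fst x) j) * of_bool (kb (snd x) j) :: real)
      = measure_pmf.expectation P (\<lambda>\<omega>. of_bool (kb \<omega> j)) * measure_pmf.expectation P (\<lambda>\<omega>. of_bool (kb \<omega> j))"
      by (rule exp_pair_prod[OF finP finP])
    then show ?thesis by (simp only: P2P pk[OF that])
  qed
  have pf: "measure_pmf.expectation P2 (\<lambda>x. f (fst x)) = measure_pmf.expectation P f" for f :: "_ \<Rightarrow> real"
    unfolding P2_def P_def by simp
  have ps: "measure_pmf.expectation P2 (\<lambda>x. f (snd x)) = measure_pmf.expectation P f" for f :: "_ \<Rightarrow> real"
    unfolding P2_def P_def by simp
  define K where "K = perc_K M n"
  have c1: "measure_pmf.expectation P2 (\<lambda>(\<omega>1, \<omega>2). V1 (perc_D M n \<omega>1 \<inter> perc_D M n \<omega>2))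
     = measure_pmf.expectation P2 (\<lambda>x. 1 - V1 (K (fst x)) - V1 (K (snd x)) + V1 (K (fst x) \<inter> K (snd x)))"
    by (rule Bochner_Integration.integral_cong[OF refl]) (auto simp: Deq Keq K_def V1_D2[OF N])
  also have "\<dots> = 1 - measure_pmf.expectation P2 (\<lambda>x. V1 (K (fst x))) - measure_pmf.expectation P2 (\<lambda>x. V1 (K (snd x)))
      + measure_pmf.expectation P2 (\<lambda>x. V1 (K (fst x) \<inter> K (snd x)))"
    by (simp add: intP2)
  finally have r1: "measure_pmf.expectation P2 (\<lambda>(\<omega>1, \<omega>2). V1 (perc_D M n \<omega>1 \<inter> perc_D M n \<omega>2))
       = 1 - 2 * measure_pmf.expectation P (\<lambda>\<omega>. V1 (perc_K M n \<omega>))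
         + measure_pmf.expectation P2 (\<lambda>(\<omega>1, \<omega>2). V1 (perc_K M n \<omega>1 \<inter> perc_K M n \<omega>2))"
    using pf[of "\<lambda>\<omega>. V1 (K \<omega>)"] ps[of "\<lambda>\<omega>. V1 (K \<omega>)"] by (simp add: K_def case_prod_beta')
  define ob where "ob \<omega> j = (of_bool (kb \<omega> j) :: real)" for \<omega> j
  have c2: "measure_pmf.expectation P2 (\<lambda>(\<omega>1, \<omega>2). V0 (perc_D M n \<omega>1 \<inter> perc_D M n \<omega>2))
     = measure_pmf.expectation P2 (\<lambda>x. V0 (K (fst x)) + V0 (K (snd x)) - V0 (K (fst x) \<inter> K (snd x))
        + Niso (K (fst x) \<inter> K (snd x)) + 1 - ob (fst x) 0 - ob (snd x) 0 - ob (fst x) (N - 1) - ob (snd x) (N - 1)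
        + ob (fst x) 0 * ob (snd x) 0 + ob (fst x) (N - 1) * ob (snd x) (N - 1))"
    by (rule Bochner_Integration.integral_cong[OF refl]) (auto simp: Deq Keq K_def V0_D2[OF N] ob_def)
  also have "\<dots> = measure_pmf.expectation P2 (\<lambda>x. V0 (K (fst x))) + measure_pmf.expectation P2 (\<lambda>x. V0 (K (snd x)))
      - measure_pmf.expectation P2 (\<lambda>x. V0 (K (fst x) \<inter> K (snd x)))
      + measure_pmf.expectation P2 (\<lambda>x. Niso (K (fst x) \<inter> K (snd x))) + 1
      - measure_pmf.expectation P2 (\<lambda>x. ob (fst x) 0) - measure_pmf.expectation P2 (\<lambda>x. ob (snd x) 0)
      - measure_pmf.expectation P2 (\<lambda>x. ob (fst x) (N - 1)) - measure_pmf.expectation P2 (\<lambda>x. ob (snd x) (N - 1))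
      + measure_pmf.expectation P2 (\<lambda>x. ob (fst x) 0 * ob (snd x) 0)
      + measure_pmf.expectation P2 (\<lambda>x. ob (fst x) (N - 1) * ob (snd x) (N - 1))"
    by (simp add: intP2)
  finally have r2raw: "measure_pmf.expectation P2 (\<lambda>(\<omega>1, \<omega>2). V0 (perc_D M n \<omega>1 \<inter> perc_D M n \<omega>2))
    = measure_pmf.expectation P2 (\<lambda>x. V0 (K (fst x))) + measure_pmf.expectation P2 (\<lambda>x. V0 (K (snd x)))
      - measure_pmf.expectation P2 (\<lambda>x. V0 (K (fst x) \<inter> K (snd x)))
      + measure_pmf.expectation P2 (\<lambda>x. Niso (K (fst x) \<inter> K (snd x))) + 1
      - measure_pmf.expectation P2 (\<lambda>x. ob (fst x) 0) - measure_pmf.expectation P2 (\<lambda>x. ob (snd x) 0)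
      - measure_pmf.expectation P2 (\<lambda>x. ob (fst x) (N - 1)) - measure_pmf.expectation P2 (\<lambda>x. ob (snd x) (N - 1))
      + measure_pmf.expectation P2 (\<lambda>x. ob (fst x) 0 * ob (snd x) 0)
      + measure_pmf.expectation P2 (\<lambda>x. ob (fst x) (N - 1) * ob (snd x) (N - 1))" .
  have e1: "measure_pmf.expectation P2 (\<lambda>x. V0 (K (fst x))) = measure_pmf.expectation P (\<lambda>\<omega>. V0 (perc_K M n \<omega>))"
    unfolding K_def by (rule pf)
  have e2: "measure_pmf.expectation P2 (\<lambda>x. V0 (K (snd x))) = measure_pmf.expectation P (\<lambda>\<omega>. V0 (perc_K M n \<omega>))"
    unfolding K_def by (rule ps)
  have e3: "measure_pmf.expectation P2 (\<lambda>x. ob (fst x) 0) = p ^ n"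
    unfolding ob_def by (subst pf, rule pk0)
  have e4: "measure_pmf.expectation P2 (\<lambda>x. ob (snd x) 0) = p ^ n"
    unfolding ob_def by (subst ps, rule pk0)
  have e5: "measure_pmf.expectation P2 (\<lambda>x. ob (fst x) (N - 1)) = p ^ n"
    unfolding ob_def by (subst pf, rule pk1)
  have e6: "measure_pmf.expectation P2 (\<lambda>x. ob (snd x) (N - 1)) = p ^ n"
    unfolding ob_def by (subst ps, rule pk1)
  have e7: "measure_pmf.expectation P2 (\<lambda>x. ob (fst x) 0 * ob (snd x) 0) = p ^ n * p ^ n"
    unfolding ob_def by (rule pp[OF N])
  have e8: "measure_pmf.expectation P2 (\<lambda>x. ob (fst x) (N - 1) * ob (snd x) (N - 1)) = p ^ n * p ^ n"
    unfolding ob_def by (rule pp) (use N in simp)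
  have e9: "measure_pmf.expectation P2 (\<lambda>x. V0 (K (fst x) \<inter> K (snd x)))
     = measure_pmf.expectation P2 (\<lambda>(\<omega>1, \<omega>2). V0 (perc_K M n \<omega>1 \<inter> perc_K M n \<omega>2))"
    by (simp only: K_def case_prod_beta')
  have e10: "measure_pmf.expectation P2 (\<lambda>x. Niso (K (fst x) \<inter> K (snd x)))
     = measure_pmf.expectation P2 (\<lambda>(\<omega>1, \<omega>2). Niso (perc_K M n \<omega>1 \<inter> perc_K M n \<omega>2))"
    by (simp only: K_def case_prod_beta')
  have p2: "p ^ (2 * n) = p ^ n * p ^ n" by (simp add: mult_2 power_add)
  have r2: "measure_pmf.expectation P2 (\<lambda>(\<omega>1, \<omega>2). V0 (perc_D M n \<omega>1 \<inter> perc_D M n \<omega>2))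
       = 2 * measure_pmf.expectation P (\<lambda>\<omega>. V0 (perc_K M n \<omega>))
         - measure_pmf.expectation P2 (\<lambda>(\<omega>1, \<omega>2). V0 (perc_K M n \<omega>1 \<inter> perc_K M n \<omega>2))
         + measure_pmf.expectation P2 (\<lambda>(\<omega>1, \<omega>2). Niso (perc_K M n \<omega>1 \<inter> perc_K M n \<omega>2))
         + 1 - 4 * p ^ n + 2 * p ^ (2 * n)"
    using r2raw unfolding e1 e2 e3 e4 e5 e6 e7 e8 e9 e10 p2 by linarith
  have r3: "measure_pmf.expectation P (\<lambda>\<omega>. V1 (perc_D M n \<omega>))
       = 1 - measure_pmf.expectation P (\<lambda>\<omega>. V1 (perc_K M n \<omega>))"
  proof -
    have "measure_pmf.expectation P (\<lambda>\<omega>. V1 (perc_D M n \<omega>))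
        = measure_pmf.expectation P (\<lambda>\<omega>. 1 - V1 (perc_K M n \<omega>))"
      by (rule Bochner_Integration.integral_cong[OF refl]) (simp add: Deq Keq V1_D1[OF N])
    then show ?thesis by (simp add: intP)
  qed
  have r4: "measure_pmf.expectation P (\<lambda>\<omega>. V0 (perc_D M n \<omega>))
       = measure_pmf.expectation P (\<lambda>\<omega>. V0 (perc_K M n \<omega>)) + 1 - 2 * p ^ n"
  proof -
    have "measure_pmf.expectation P (\<lambda>\<omega>. V0 (perc_D M n \<omega>))
        = measure_pmf.expectation P (\<lambda>\<omega>. V0 (perc_K M n \<omega>) + 1 - ob \<omega> 0 - ob \<omega> (N - 1))"
      by (rule Bochner_Integration.integral_cong[OF refl]) (simp add: Deq Keq V0_D1[OF N] ob_def)
    then show ?thesis using pk0 pk1 by (simp add: intP ob_def)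
  qed
  show ?thesis using r1 r2 r3 r4 by blast
qed


end
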